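(* Let $q$ be a prime power, $k,b,t$ positive integers and $f:\mathbb{F}_q^k\to\mathrm{Im}(f)$ a function with image $\mathrm{Im}(f)=\{f_1,\ldots,f_E\}$. Then \[ r_b^f(k,t)\le N_b\big(\boldsymbol{B}_f^{(2)}(t,f_1,\ldots,f_E)\big). \]
   Context: For $\boldsymbol{z}=(z_0,\ldots,z_{n-1})\in\mathbb{F}_q^n$, the $b$-symbol distance $d_b(\boldsymbol{z},\boldsymbol{w})$ is the number of $i\in\{0,\ldots,n-1\}$ with $(z_i,\ldots,z_{i+b-1})\neq(w_i,\ldots,w_{i+b-1})$ (indices mod $n$). A systematic encoding $\mathrm{Enc}(\boldsymbol{x})=(\boldsymbol{x},p(\boldsymbol{x}))\in\mathbb{F}_q^{k+r}$ is a function-correcting $b$-symbol code for $f$ if $d_b(\mathrm{Enc}(\boldsymbol{x}_1),\mathrm{Enc}(\boldsymbol{x}_2))\ge 2t+1$ whenever $f(\boldsymbol{x}_1)\ne f(\boldsymbol{x}_2)$; $r_b^f(k,t)$ is the smallest $r$ for which one exists. For an $M\times M$ nonnegative integer matrix $\boldsymbol{B}$, $N_b(\boldsymbol{B})$ is the smallest $r$ such that there exist $\boldsymbol{p}_1,\ldots,\boldsymbol{p}_M\in\mathbb{F}_q^r$ (in some ordering) with $d_b(\boldsymbol{p}_i,\boldsymbol{p}_j)\ge[\boldsymbol{B}]_{ij}$ for all $i,j$. The $b$-symbol distance between function values is $d_b^f(f_i,f_j)=\min\{d_b(\boldsymbol{x}_1,\boldsymbol{x}_2):\boldsymbol{x}_1,\boldsymbol{x}_2\in\mathbb{F}_q^k,\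 f(\boldsymbol{x}_1)=f_i,\ f(\boldsymbol{x}_2)=f_j\}$. The $E\times E$ matrix $\boldsymbol{B}_f^{(2)}(t,f_1,\ldots,f_E)$ has entries $\max\{2t+b-d_b^f(f_i,f_j),0\}$ for $i\ne j$ and $0$ on the diagonal. *)

theory Defs
  imports Main
begin

text \<open>Vectors of F_q^n are lists of length n over a finite field type 'a (q = CARD('a)).\<close>

definition vecs :: "nat \<Rightarrow> 'a list set" where
  "vecs n = {x. length x = n}"

definition bdist :: "nat \<Rightarrow> 'a list \<Rightarrow> 'a list \<Rightarrow> nat" where
  "bdist b z w = card {i. i < length z \<and>
      (\<exists>j<b. z ! ((i + j) mod length z) \<noteq> w ! ((i + j) mod length z))}"

definition is_fcbsc :: "nat \<Rightarrow> nat \<Rightarrow> nat \<Rightarrow> ('a list \<Rightarrow> 'c) \<Rightarrow> ('a list \<Rightarrow> 'a list) \<Rightarrow> nat \<Rightarrow> bool" where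
  "is_fcbsc b k t f p r \<longleftrightarrow>
     (\<forall>x\<in>vecs k. length (p x) = r) \<and>
     (\<forall>x1\<in>vecs k. \<forall>x2\<in>vecs k. f x1 \<noteq> f x2 \<longrightarrow>
         bdist b (x1 @ p x1) (x2 @ p x2) \<ge> 2 * t + 1)"

definition r_bf :: "nat \<Rightarrow> nat \<Rightarrow> nat \<Rightarrow> ('a list \<Rightarrow> 'c) \<Rightarrow> nat" where
  "r_bf b k t f = (LEAST r. \<exists>p. is_fcbsc b k t f p r)"

definition N_b :: "'a itself \<Rightarrow> nat \<Rightarrow> nat \<Rightarrow> (nat \<Rightarrow> nat \<Rightarrow> nat) \<Rightarrow> nat" where
  "N_b _ b M B = (LEAST r. \<exists>P :: nat \<Rightarrow> 'a list.
      (\<forall>i<M. length (P i) = r) \<and> (\<forall>i<M. \<forall>j<M. bdist b (P i) (P j) \<ge> B i j))"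

definition d_bf :: "nat \<Rightarrow> nat \<Rightarrow> ('a list \<Rightarrow> 'c) \<Rightarrow> 'c \<Rightarrow> 'c \<Rightarrow> nat" where
  "d_bf b k f u v = Min {bdist b x1 x2 | x1 x2. x1 \<in> vecs k \<and> x2 \<in> vecs k \<and> f x1 = u \<and> f x2 = v}"

text \<open>Matrix B_f^(2)(t, f_1..f_E), 0-indexed via the list fs; nat subtraction = max{.,0}.\<close>
definition Bf2 :: "nat \<Rightarrow> nat \<Rightarrow> nat \<Rightarrow> ('a list \<Rightarrow> 'c) \<Rightarrow> 'c list \<Rightarrow> nat \<Rightarrow> nat \<Rightarrow> nat" where
  "Bf2 b k t f fs i j = (if i = j then 0 else (2 * t + b) - d_bf b k f (fs ! i) (fs ! j))"

end

theory Submission imports Defs begin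

lemma bdist_le: "bdist b z w \<le> length z"
proof -
  have "{i. i < length z \<and> (\<exists>j<b. z ! ((i + j) mod length z) \<noteq> w ! ((i + j) mod length z))} \<subseteq> {..<length z}" by auto
  then show ?thesis unfolding bdist_def using card_mono[of "{..<length z}"] by fastforce
qed

lemma concat_bound:
  fixes x1 x2 p1 p2 :: "'a list"
  assumes lx1: "length x1 = k" and lx2: "length x2 = k" and lp1: "length p1 = r" and lp2: "length p2 = r"
    and ne: "x1 \<noteq> x2" and bpos: "b > 0"
  shows "bdist b x1 x2 + bdist b p1 p2 \<le> bdist b (x1 @ p1) (x2 @ p2) + (b - 1)"
proof -
  define n where "n = k + r"
  define z1 where "z1 = x1 @ p1"
  define z2 where "z2 = x2 @ p2"
  have lz1: "length z1 = n" and lz2: "length z2 = n" using assms by (auto simp: z1_def z2_def n_def)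
  define Dx where "Dx = {d. d < k \<and> x1 ! d \<noteq> x2 ! d}"
  define Dp where "Dp = {d. d < r \<and> p1 ! d \<noteq> p2 ! d}"
  have Dxne: "Dx \<noteq> {}"
  proof
    assume "Dx = {}"
    then have "\<forall>d<k. x1 ! d = x2 ! d" unfolding Dx_def by auto
    then have "x1 = x2" using lx1 lx2 by (intro nth_equalityI) auto
    then show False using ne by simp
  qed
  have fDx: "finite Dx" "finite Dp" unfolding Dx_def Dp_def by auto
  define lx where "lx = Min Dx"
  define lp where "lp = Min Dp"
  have lxD: "lx \<in> Dx" using Dxne fDx lx_def by simp
  have lxmin: "\<And>d. d \<in> Dx \<Longrightarrow> lx \<le> d" using fDx lx_def by simp
  have lpD: "Dp \<noteq> {} \<Longrightarrow> lp \<in> Dp" using fDx lp_def by simp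
  have lpmin: "\<And>d. d \<in> Dp \<Longrightarrow> lp \<le> d" using fDx lp_def by simp
  have z1x: "\<And>d. d < k \<Longrightarrow> z1 ! d = x1 ! d" and z2x: "\<And>d. d < k \<Longrightarrow> z2 ! d = x2 ! d"
    using lx1 lx2 by (auto simp: z1_def z2_def nth_append)
  have z1p: "\<And>d. d < r \<Longrightarrow> z1 ! (k + d) = p1 ! d" and z2p: "\<And>d. d < r \<Longrightarrow> z2 ! (k + d) = p2 ! d"
    using lx1 lx2 by (auto simp: z1_def z2_def nth_append)
  define Sx where "Sx = {i. i < k \<and> (\<exists>j<b. x1 ! ((i + j) mod k) \<noteq> x2 ! ((i + j) mod k))}"
  define Sp where "Sp = {i. i < r \<and> (\<exists>j<b. p1 ! ((i + j) mod r) \<noteq> p2 ! ((i + j) mod r))}"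
  define Sz where "Sz = {i. i < n \<and> (\<exists>j<b. z1 ! ((i + j) mod n) \<noteq> z2 ! ((i + j) mod n))}"
  have bx: "bdist b x1 x2 = card Sx" unfolding bdist_def Sx_def lx1 ..
  have bp: "bdist b p1 p2 = card Sp" unfolding bdist_def Sp_def lp1 ..
  have bz: "bdist b (x1 @ p1) (x2 @ p2) = card Sz" unfolding bdist_def Sz_def z1_def[symmetric] z2_def[symmetric] lz1 ..
  have inSz: "i \<in> Sz" if "i < n" "j < b" "i + j < n" "z1 ! (i + j) \<noteq> z2 ! (i + j)" for i j
    using that unfolding Sz_def by auto
  have inSz2: "i \<in> Sz" if "i < n" "j < b" "i + j = n + d" "d < n" "z1 ! d \<noteq> z2 ! d" for i j d
  proof -
    have "(i + j) mod n = d" using that by simp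
    then show ?thesis using that unfolding Sz_def by auto
  qed
  define C1 where "C1 = (Dp \<noteq> {} \<and> lp \<le> lx)"
  define LossX where "LossX = {i. i < k \<and> k < i + b}"
  define LossP where "LossP = (\<lambda>i. k + i) ` {i. i < r \<and> r < i + b}"
  have xpart: "i \<in> Sz \<or> (\<not> C1 \<and> i \<in> LossX)" if "i \<in> Sx" for i
  proof -
    from that obtain j where ik: "i < k" and jb: "j < b" and dj: "x1 ! ((i + j) mod k) \<noteq> x2 ! ((i + j) mod k)"
      unfolding Sx_def by auto
    have kpos: "k > 0" using ik by simp
    define e where "e = (i + j) mod k"
    have eD: "e \<in> Dx" using dj kpos unfolding e_def Dx_def by auto
    show ?thesis
    proof (cases "i + j < k")
      case True
      then have "e = i + j" unfolding e_def by simp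
      then show ?thesis using inSz[of i j] True ik jb eD z1x z2x unfolding Dx_def n_def by auto
    next
      case False
      show ?thesis
      proof (cases "\<exists>d\<in>Dx. i \<le> d")
        case True
        then obtain d where dD: "d \<in> Dx" "i \<le> d" by blast
        then have "d < k" unfolding Dx_def by auto
        then have "d - i < b" using False jb by linarith
        then show ?thesis using inSz[of i "d - i"] dD ik z1x z2x unfolding Dx_def n_def by auto
      next
        case nd: False
        have "e < i" using eD nd by auto
        have "i + j = (i + j) div k * k + e" unfolding e_def by simp
        moreover have "(i + j) div k \<ge> 1" using div_le_mono[of k "i + j" k] False kpos by simp
        ultimately have "i + j \<ge> k + e" by (metis add_le_mono1 mult_1 mult_le_mono1)
        moreover have "lx \<le> e" using lxmin eD by simp
        ultimately have kb: "k - i + lx < b" using jb ik by linarith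
        show ?thesis
        proof (cases C1)
          case True
          then have "lp \<in> Dp" "lp \<le> lx" using lpD C1_def by auto
          then show ?thesis using inSz[of i "k - i + lp"] kb ik z1p z2p unfolding Dp_def n_def by auto
        next
          case False
          then show ?thesis using kb ik unfolding LossX_def by auto
        qed
      qed
    qed
  qed
  have ppart: "k + i \<in> Sz \<or> (C1 \<and> k + i \<in> LossP)" if "i \<in> Sp" for i
  proof -
    from that obtain j where ik: "i < r" and jb: "j < b" and dj: "p1 ! ((i + j) mod r) \<noteq> p2 ! ((i + j) mod r)"
      unfolding Sp_def by auto
    have kpos: "r > 0" using ik by simp
    define e where "e = (i + j) mod r"
    have eD: "e \<in> Dp" using dj kpos unfolding e_def Dp_def by auto
    show ?thesis
    proof (cases "i + j < r")
      case True
      then have "e = i + j" unfolding e_def by simp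
      then show ?thesis using inSz[of "k + i" j] True ik jb eD z1p z2p unfolding Dp_def n_def
        by (auto simp: add.assoc)
    next
      case False
      show ?thesis
      proof (cases "\<exists>d\<in>Dp. i \<le> d")
        case True
        then obtain d where dD: "d \<in> Dp" "i \<le> d" by blast
        then have "d < r" unfolding Dp_def by auto
        then have "d - i < b" using False jb by linarith
        then show ?thesis using inSz[of "k + i" "d - i"] dD ik z1p z2p unfolding Dp_def n_def by auto
      next
        case nd: False
        have "e < i" using eD nd by auto
        have "i + j = (i + j) div r * r + e" unfolding e_def by simp
        moreover have "(i + j) div r \<ge> 1" using div_le_mono[of r "i + j" r] False kpos by simp
        ultimately have "i + j \<ge> r + e" by (metis add_le_mono1 mult_1 mult_le_mono1)
        moreover have "lp \<le> e" using lpmin eD by simp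
        ultimately have kb: "r - i + lp < b" using jb ik by linarith
        have Dpne: "Dp \<noteq> {}" using eD by auto
        show ?thesis
        proof (cases C1)
          case True
          then show ?thesis using kb ik unfolding LossP_def by auto
        next
          case False
          then have "lx < lp" using Dpne C1_def by auto
          moreover have "lx < k" using lxD Dx_def by auto
          ultimately show ?thesis using inSz2[of "k + i" "r - i + lx" lx] kb ik z1x z2x lxD
            unfolding Dx_def n_def by auto
        qed
      qed
    qed
  qed
  define Loss where "Loss = (if C1 then LossP else LossX)"
  have sub: "Sx \<union> (\<lambda>i. k + i) ` Sp \<subseteq> Sz \<union> Loss"
    using xpart ppart unfolding Loss_def by (auto split: if_splits)
  have cLX: "card LossX \<le> b - 1"
  proof -
    have "LossX \<subseteq> {k - (b - 1)..<k}" unfolding LossX_def by auto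
    then have "card LossX \<le> card {k - (b - 1)..<k}" by (intro card_mono) auto
    then show ?thesis by simp
  qed
  have cLP: "card LossP \<le> b - 1"
  proof -
    have "{i. i < r \<and> r < i + b} \<subseteq> {r - (b - 1)..<r}" by auto
    then have "card {i. i < r \<and> r < i + b} \<le> card {r - (b - 1)..<r}" by (intro card_mono) auto
    then have "card {i. i < r \<and> r < i + b} \<le> b - 1" by simp
    then show ?thesis unfolding LossP_def using card_image_le[of "{i. i < r \<and> r < i + b}" "\<lambda>i. k + i"]
      by auto
  qed
  have cL: "card Loss \<le> b - 1" using cLX cLP Loss_def by auto
  have fin: "finite Sx" "finite Sp" "finite Sz" "finite Loss"
    unfolding Sx_def Sp_def Sz_def Loss_def LossX_def LossP_def by auto
  have disj: "Sx \<inter> (\<lambda>i. k + i) ` Sp = {}" unfolding Sx_def by auto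
  have "card Sx + card Sp = card (Sx \<union> (\<lambda>i. k + i) ` Sp)"
    using card_Un_disjoint[OF fin(1) _ disj] fin(2) card_image[of "\<lambda>i. k + i" Sp] by auto
  also have "\<dots> \<le> card (Sz \<union> Loss)" using sub fin by (intro card_mono) auto
  also have "\<dots> \<le> card Sz + card Loss" by (rule card_Un_le)
  finally show ?thesis using bx bp bz cL by linarith
qed


lemma exists_code:
  fixes B :: "nat \<Rightarrow> nat \<Rightarrow> nat" and L :: nat
  assumes "\<And>i j. i < M \<Longrightarrow> j < M \<Longrightarrow> i \<noteq> j \<Longrightarrow> B i j \<le> L"
    and "\<And>i. i < M \<Longrightarrow> B i i = 0" and "b > 0"
  shows "\<exists>P :: nat \<Rightarrow> 'a::field list. (\<forall>i<M. length (P i) = M * L) \<and> (\<forall>i<M. \<forall>j<M. bdist b (P i) (P j) \<ge> B i j)"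
proof -
  define P :: "nat \<Rightarrow> 'a list" where "P i = map (\<lambda>m. if m div L = i then 1 else 0) [0..<M*L]" for i
  have "bdist b (P i) (P j) \<ge> B i j" if ij: "i < M" "j < M" for i j
  proof (cases "i = j")
    case True then show ?thesis using assms(2) ij by simp
  next
    case False
    have sub: "{i*L..<i*L+L} \<subseteq> {m. m < length (P i) \<and> (\<exists>j'<b. P i ! ((m + j') mod length (P i)) \<noteq> P j ! ((m + j') mod length (P i)))}"
    proof
      fix m assume m: "m \<in> {i*L..<i*L+L}"
      have "Suc i \<le> M" using ij by simp
      then have "Suc i * L \<le> M * L" by (rule mult_le_mono1)
      then have mM: "m < M * L" using m by simp
      have m1: "L * i \<le> m" and m2: "m < L * Suc i" using m by (auto simp: mult.commute)
      have "m div L = i" by (rule div_nat_eqI[OF m1 m2])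
      then have "P i ! m \<noteq> P j ! m" using mM False by (simp add: P_def)
      then show "m \<in> {m. m < length (P i) \<and> (\<exists>j'<b. P i ! ((m + j') mod length (P i)) \<noteq> P j ! ((m + j') mod length (P i)))}"
      proof -
        have "length (P i) = M * L" by (simp add: P_def)
        then show ?thesis using mM assms(3) \<open>P i ! m \<noteq> P j ! m\<close> by (intro CollectI conjI exI[of _ 0]) auto
      qed
    qed
    have "L = card {i*L..<i*L+L}" by simp
    also have "\<dots> \<le> bdist b (P i) (P j)" unfolding bdist_def using sub by (intro card_mono) auto
    finally show ?thesis using assms(1)[OF ij False] by simp
  qed
  moreover have "\<forall>i<M. length (P i) = M * L" by (simp add: P_def)
  ultimately show ?thesis by blast
qed

theorem mainTheorem3:
  fixes f :: "'a::{finite,field} list \<Rightarrow> 'c"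
    and fs :: "'c list"
    and k b t :: nat
  assumes "k > 0" and "b > 0" and "t > 0"
    and "distinct fs"
    and "set fs = f ` vecs k"
  shows "r_bf b k t f \<le> N_b TYPE('a) b (length fs) (Bf2 b k t f fs)"
proof -
  define M where "M = length fs"
  define B where "B = Bf2 b k t f fs"
  define Q where "Q = (\<lambda>r. \<exists>P :: nat \<Rightarrow> 'a list.
      (\<forall>i<M. length (P i) = r) \<and> (\<forall>i<M. \<forall>j<M. bdist b (P i) (P j) \<ge> B i j))"
  have NQ: "N_b TYPE('a) b (length fs) (Bf2 b k t f fs) = (LEAST r. Q r)"
    unfolding N_b_def Q_def M_def B_def ..
  have "Q (M * (2 * t + b))" unfolding Q_def
    by (rule exists_code) (auto simp: B_def Bf2_def assms(2))
  then have "Q (LEAST r. Q r)" by (rule LeastI)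
  then obtain P :: "nat \<Rightarrow> 'a list" where Plen: "\<forall>i<M. length (P i) = (LEAST r. Q r)"
    and Pd: "\<forall>i<M. \<forall>j<M. bdist b (P i) (P j) \<ge> B i j" unfolding Q_def by blast
  define ix where "ix x = (SOME i. i < M \<and> fs ! i = f x)" for x
  have ix: "ix x < M \<and> fs ! ix x = f x" if "x \<in> vecs k" for x
  proof -
    have "f x \<in> set fs" using assms(5) that by auto
    then have "\<exists>i. i < M \<and> fs ! i = f x" by (auto simp: M_def in_set_conv_nth)
    then show ?thesis unfolding ix_def by (rule someI_ex)
  qed
  define p where "p x = P (ix x)" for x
  have "is_fcbsc b k t f p (LEAST r. Q r)"
    unfolding is_fcbsc_def
  proof (intro conjI ballI impI)
    fix x :: "'a list" assume "x \<in> vecs k"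
    then show "length (p x) = (LEAST r. Q r)" using ix Plen p_def by auto
  next
    fix x1 x2 :: "'a list" assume x1: "x1 \<in> vecs k" and x2: "x2 \<in> vecs k" and fne: "f x1 \<noteq> f x2"
    have i1: "ix x1 < M" "fs ! ix x1 = f x1" and i2: "ix x2 < M" "fs ! ix x2 = f x2" using ix x1 x2 by auto
    have ne: "ix x1 \<noteq> ix x2" using i1 i2 fne by auto
    have fin: "finite {bdist b y1 y2 | y1 y2. y1 \<in> vecs k \<and> y2 \<in> vecs k \<and> f y1 = f x1 \<and> f y2 = f x2}"
    proof -
      have "{bdist b y1 y2 | y1 y2. y1 \<in> vecs k \<and> y2 \<in> vecs k \<and> f y1 = f x1 \<and> f y2 = f x2} \<subseteq> {..k}"
        using bdist_le by (fastforce simp: vecs_def)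
      then show ?thesis using finite_subset by blast
    qed
    have dle: "d_bf b k f (f x1) (f x2) \<le> bdist b x1 x2"
      unfolding d_bf_def using x1 x2 by (intro Min_le[OF fin]) blast
    have "B (ix x1) (ix x2) \<le> bdist b (p x1) (p x2)" using Pd i1 i2 p_def by auto
    moreover have "B (ix x1) (ix x2) = (2 * t + b) - d_bf b k f (f x1) (f x2)"
      using ne i1 i2 by (simp add: B_def Bf2_def)
    ultimately have s: "2 * t + b \<le> bdist b x1 x2 + bdist b (p x1) (p x2)" using dle by linarith
    have "x1 \<noteq> x2" using fne by auto
    have lp1: "length (p x1) = (LEAST r. Q r)" using Plen i1(1) unfolding p_def by blast
    have lp2: "length (p x2) = (LEAST r. Q r)" using Plen i2(1) unfolding p_def by blast
    have lx1: "length x1 = k" and lx2: "length x2 = k" using x1 x2 unfolding vecs_def by auto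
    have "bdist b x1 x2 + bdist b (p x1) (p x2) \<le> bdist b (x1 @ p x1) (x2 @ p x2) + (b - 1)"
      by (rule concat_bound[OF lx1 lx2 lp1 lp2 \<open>x1 \<noteq> x2\<close> assms(2)])
    then show "bdist b (x1 @ p x1) (x2 @ p x2) \<ge> 2 * t + 1" using s assms(2) by linarith
  qed
  then have "r_bf b k t f \<le> (LEAST r. Q r)" unfolding r_bf_def by (intro Least_le) blast
  then show ?thesis using NQ by simp
qed

end
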